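(* Let $A\subseteq\mathcal{R}$ be outer measurable and let $(I_n)_{n\ge1}$ be pairwise disjoint intervals in $\mathcal{R}$ with $A\cap I_n=\emptyset$ for every $n$ and $\lim_{n\to\infty}l(I_n)=0$. Then $A\cup\bigcup_{n=1}^\infty I_n$ is outer measurable and $$M_u\Big(A\cup\bigcup_{n=1}^\infty I_n\Big)=M_u(A)+\sum_{n=1}^\infty l(I_n).$$
   Context: $\mathcal{R}$ denotes the Levi-Civita field: functions $x:\mathbb{Q}\to\mathbb{R}$ with left-finite support, with componentwise addition and formal power series multiplication, ordered by $x>0$ iff $x\ne0$ and $x[\min\operatorname{supp}x]>0$; it is a non-Archimedean ordered field extension of $\mathbb{R}$, Cauchy complete in the order topology, in which all limits and series are taken (a series $\sum a_n$ converges iff $a_n\to0$). An interval is a set $[a,b],[a,b),(a,b]$ or $(a,b)$ with $a<b$ in $\mathcal{R}$, of length $l=b-a$. A cover of $A\subseteq\mathcal{R}$ is a sequence of intervals $(S_n)_{n\ge1}$ with $A\subseteq\bigcup_n S_n$ and $\sum_n l(S_n)$ convergent in $\mathcal{R}$. $A$ is called outer measurable if the infimum $\inf\{\sum_n l(S_n): (S_n)\text{ a cover of }A\}$ exists in $\mathcal{R}$; this infimum is then called the outer measure $M_u(A)$. *)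

theory Defs
  imports Complex_Main
begin

section \<open>The Levi-Civita field (ordered additive structure)\<close>

typedef lc = "{x :: rat \<Rightarrow> real. \<forall>r. finite {q. x q \<noteq> 0 \<and> q < r}}"
  morphisms lc_coeff Abs_lc
  by (rule exI[of _ "\<lambda>_. 0"]) simp

setup_lifting type_definition_lc

instantiation lc :: "{zero, plus, minus, uminus}"
begin

lift_definition zero_lc :: lc is "\<lambda>_. 0" by simp

lift_definition plus_lc :: "lc \<Rightarrow> lc \<Rightarrow> lc" is "\<lambda>x y q. x q + y q"
proof -
  fix x y :: "rat \<Rightarrow> real" and r :: rat
  assume x: "\<And>r. finite {q. x q \<noteq> 0 \<and> q < r}" and y: "\<And>r. finite {q. y q \<noteq> 0 \<and> q < r}"
  show "finite {q. x q + y q \<noteq> 0 \<and> q < r}"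
    by (rule finite_subset[of _ "{q. x q \<noteq> 0 \<and> q < r} \<union> {q. y q \<noteq> 0 \<and> q < r}"])
       (use x y in auto)
qed

lift_definition uminus_lc :: "lc \<Rightarrow> lc" is "\<lambda>x q. - x q" by simp

lift_definition minus_lc :: "lc \<Rightarrow> lc \<Rightarrow> lc" is "\<lambda>x y q. x q - y q"
proof -
  fix x y :: "rat \<Rightarrow> real" and r :: rat
  assume x: "\<And>r. finite {q. x q \<noteq> 0 \<and> q < r}" and y: "\<And>r. finite {q. y q \<noteq> 0 \<and> q < r}"
  show "finite {q. x q - y q \<noteq> 0 \<and> q < r}"
    by (rule finite_subset[of _ "{q. x q \<noteq> 0 \<and> q < r} \<union> {q. y q \<noteq> 0 \<and> q < r}"])
       (use x y in auto)
qed

instance ..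
end

definition lc_pos :: "lc \<Rightarrow> bool" where
  "lc_pos x \<longleftrightarrow> x \<noteq> 0 \<and>
     (\<exists>q. lc_coeff x q > 0 \<and> (\<forall>p<q. lc_coeff x p = 0))"

instantiation lc :: "{ord, abs}"
begin
definition less_lc :: "lc \<Rightarrow> lc \<Rightarrow> bool" where "less_lc x y \<longleftrightarrow> lc_pos (y - x)"
definition less_eq_lc :: "lc \<Rightarrow> lc \<Rightarrow> bool" where "less_eq_lc x y \<longleftrightarrow> x < y \<or> x = y"
definition abs_lc :: "lc \<Rightarrow> lc" where "abs_lc x = (if x < 0 then - x else x)"
instance ..
end

definition lc_tendsto :: "(nat \<Rightarrow> lc) \<Rightarrow> lc \<Rightarrow> bool" where
  "lc_tendsto a L \<longleftrightarrow> (\<forall>e. 0 < e \<longrightarrow> (\<exists>N. \<forall>n\<ge>N. \<bar>a n - L\<bar> < e))"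

primrec lc_psum :: "(nat \<Rightarrow> lc) \<Rightarrow> nat \<Rightarrow> lc" where
  "lc_psum a 0 = 0"
| "lc_psum a (Suc n) = lc_psum a n + a n"

definition lc_sums :: "(nat \<Rightarrow> lc) \<Rightarrow> lc \<Rightarrow> bool" where
  "lc_sums a s \<longleftrightarrow> lc_tendsto (lc_psum a) s"

definition lc_summable :: "(nat \<Rightarrow> lc) \<Rightarrow> bool" where
  "lc_summable a \<longleftrightarrow> (\<exists>s. lc_sums a s)"

definition lc_suminf :: "(nat \<Rightarrow> lc) \<Rightarrow> lc" where
  "lc_suminf a = (THE s. lc_sums a s)"

definition lc_interval_ab :: "lc \<Rightarrow> lc \<Rightarrow> lc set \<Rightarrow> bool" where
  "lc_interval_ab a b S \<longleftrightarrow> a < b \<and>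
     (S = {a..b} \<or> S = {a..<b} \<or> S = {a<..b} \<or> S = {a<..<b})"

definition lc_interval :: "lc set \<Rightarrow> bool" where
  "lc_interval S \<longleftrightarrow> (\<exists>a b. lc_interval_ab a b S)"

definition lc_len :: "lc set \<Rightarrow> lc" where
  "lc_len S = (THE d. \<exists>a b. lc_interval_ab a b S \<and> d = b - a)"

definition lc_cover :: "lc set \<Rightarrow> (nat \<Rightarrow> lc set) \<Rightarrow> bool" where
  "lc_cover A S \<longleftrightarrow> (\<forall>n. lc_interval (S n)) \<and> A \<subseteq> (\<Union>n. S n)
      \<and> lc_summable (\<lambda>n. lc_len (S n))"

definition lc_is_inf :: "lc \<Rightarrow> lc set \<Rightarrow> bool" where
  "lc_is_inf m X \<longleftrightarrow> (\<forall>x\<in>X. m \<le> x) \<and> (\<forall>m'. (\<forall>x\<in>X. m' \<le> x) \<longrightarrow> m' \<le> m)"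

definition lc_cover_sums :: "lc set \<Rightarrow> lc set" where
  "lc_cover_sums A = {lc_suminf (\<lambda>n. lc_len (S n)) | S. lc_cover A S}"

definition lc_outer_measurable :: "lc set \<Rightarrow> bool" where
  "lc_outer_measurable A \<longleftrightarrow> (\<exists>m. lc_is_inf m (lc_cover_sums A))"

definition lc_Mu :: "lc set \<Rightarrow> lc" where
  "lc_Mu A = (THE m. lc_is_inf m (lc_cover_sums A))"

end

theory Submission imports Defs "HOL-Analysis.Continuum_Not_Denumerable"
begin

lemma lc_coeff_add[simp]: "lc_coeff (x+y) q = lc_coeff x q + lc_coeff y q" by transfer simp
lemma lc_coeff_diff[simp]: "lc_coeff (x-y) q = lc_coeff x q - lc_coeff y q" by transfer simp
lemma lc_coeff_uminus[simp]: "lc_coeff (-x) q = - lc_coeff x q" by transfer simp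
lemma lc_coeff_zero[simp]: "lc_coeff 0 q = 0" by transfer simp
lemma lc_ext: "(\<And>q. lc_coeff x q = lc_coeff y q) \<Longrightarrow> x = y"
  by (metis ext lc_coeff_inject)
lemma lc_finite: "finite {q. lc_coeff x q \<noteq> 0 \<and> q < r}"
  using lc_coeff[of x] by auto

instance lc :: ab_group_add
  by standard (auto intro!: lc_ext simp: algebra_simps)

lemma lc_lead: assumes "x \<noteq> 0" shows "\<exists>q. lc_coeff x q \<noteq> 0 \<and> (\<forall>p<q. lc_coeff x p = 0)"
proof -
  obtain q0 where q0: "lc_coeff x q0 \<noteq> 0" using assms lc_ext[of x 0] by auto
  define F where "F = {q. lc_coeff x q \<noteq> 0 \<and> q < q0+1}"
  have fin: "finite F" unfolding F_def by (rule lc_finite)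
  have q0F: "q0 \<in> F" using q0 unfolding F_def by simp
  hence ne: "F \<noteq> {}" by blast
  define m where "m = Min F"
  have mF: "m \<in> F" unfolding m_def using fin ne by (rule Min_in)
  have mle: "\<And>p. p \<in> F \<Longrightarrow> m \<le> p" unfolding m_def using fin by (rule Min_le)
  have "\<forall>p<m. lc_coeff x p = 0"
  proof (intro allI impI, rule ccontr)
    fix p assume p: "p < m" "lc_coeff x p \<noteq> 0"
    have "m \<le> q0" using mle[OF q0F] .
    hence "p < q0 + 1" using p(1) by linarith
    hence "p \<in> F" using p(2) unfolding F_def by simp
    hence "m \<le> p" by (rule mle)
    thus False using p(1) by simp
  qed
  moreover have "lc_coeff x m \<noteq> 0" using mF unfolding F_def by simp
  ultimately show ?thesis by blast
qed

lemma lead_unique: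
  assumes "lc_coeff x q \<noteq> 0" "\<forall>p<q. lc_coeff x p = 0" "lc_coeff x q' \<noteq> 0" "\<forall>p<q'. lc_coeff x p = 0"
  shows "q = q'"
  using assms by (metis linorder_neqE)

lemma pos_def2: "lc_pos x \<longleftrightarrow> (\<exists>q. lc_coeff x q > 0 \<and> (\<forall>p<q. lc_coeff x p = 0))"
  unfolding lc_pos_def by (auto)

lemma pos_add: assumes "lc_pos x" "lc_pos y" shows "lc_pos (x+y)"
proof -
  obtain q1 where q1: "lc_coeff x q1 > 0" "\<forall>p<q1. lc_coeff x p = 0" using assms(1) unfolding pos_def2 by blast
  obtain q2 where q2: "lc_coeff y q2 > 0" "\<forall>p<q2. lc_coeff y p = 0" using assms(2) unfolding pos_def2 by blast
  define q where "q = min q1 q2"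
  have "\<forall>p<q. lc_coeff (x+y) p = 0" using q1 q2 by (simp add: q_def)
  moreover have "lc_coeff (x+y) q > 0"
  proof (cases "q1 \<le> q2")
    case True
    hence "q = q1" by (simp add: q_def)
    moreover have "lc_coeff y q1 \<ge> 0" using q2 True by (cases "q1 = q2") auto
    ultimately show ?thesis using q1 by simp
  next
    case False
    hence "q = q2" by (simp add: q_def)
    moreover have "lc_coeff x q2 \<ge> 0" using q1 False by auto
    ultimately show ?thesis using q2 by simp
  qed
  ultimately show ?thesis unfolding pos_def2 by blast
qed

lemma pos_trich: assumes "x \<noteq> 0" shows "lc_pos x \<or> lc_pos (-x)"
proof -
  obtain q where q: "lc_coeff x q \<noteq> 0" "\<forall>p<q. lc_coeff x p = 0" using lc_lead[OF assms] by auto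
  show ?thesis
  proof (cases "lc_coeff x q > 0")
    case True thus ?thesis using q unfolding pos_def2 by blast
  next
    case False hence "lc_coeff (-x) q > 0" using q by simp
    thus ?thesis using q unfolding pos_def2 by (intro disjI2 exI[of _ q]) auto
  qed
qed

lemma pos_not_both: "\<not> (lc_pos x \<and> lc_pos (-x))"
proof
  assume h: "lc_pos x \<and> lc_pos (-x)"
  obtain q1 where q1: "lc_coeff x q1 > 0" "\<forall>p<q1. lc_coeff x p = 0" using h unfolding pos_def2 by blast
  obtain q2 where q2: "lc_coeff (-x) q2 > 0" "\<forall>p<q2. lc_coeff (-x) p = 0" using h unfolding pos_def2 by blast
  have "lc_coeff x q2 \<noteq> 0" "\<forall>p<q2. lc_coeff x p = 0" using q2 by auto
  hence "q1 = q2" using lead_unique[of x q1 q2] q1 by auto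
  thus False using q1 q2 by simp
qed

lemma pos_zero: "\<not> lc_pos 0" unfolding lc_pos_def by simp

lemma neg_diff_lc: "-(y - x) = x - (y::lc)" by simp
lemma l_lenle: "((x::lc) < y) = (x \<le> y \<and> \<not> y \<le> x)"
proof (cases "x = y")
  case True thus ?thesis using pos_zero unfolding less_eq_lc_def unfolding less_lc_def by simp
next
  case False
  have a: "\<not> (lc_pos (y-x) \<and> lc_pos (x-y))" using pos_not_both[of "y - x", unfolded minus_diff_eq] .
  thus ?thesis using False unfolding less_eq_lc_def unfolding less_lc_def by blast
qed
lemma l_trans: "(x::lc) \<le> y \<Longrightarrow> y \<le> z \<Longrightarrow> x \<le> z"
proof -
  assume h1: "x \<le> y" and h2: "y \<le> z"
  have e: "z - y + (y - x) = z - x" by simp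
  have p: "lc_pos (y-x) \<Longrightarrow> lc_pos (z-y) \<Longrightarrow> lc_pos (z-x)" using pos_add[of "z-y" "y-x"] by (simp only: e)
  show ?thesis
  proof (cases "x = y")
    case True thus ?thesis using h2 by simp
  next
    case False
    hence 1: "lc_pos (y-x)" using h1 unfolding less_eq_lc_def unfolding less_lc_def by simp
    show ?thesis
    proof (cases "y = z")
      case True thus ?thesis using h1 by simp
    next
      case False
      hence "lc_pos (z-y)" using h2 unfolding less_eq_lc_def unfolding less_lc_def by simp
      thus ?thesis using p 1 unfolding less_eq_lc_def unfolding less_lc_def by simp
    qed
  qed
qed
lemma l_antisym: "(x::lc) \<le> y \<Longrightarrow> y \<le> x \<Longrightarrow> x = y"
proof (rule ccontr)
  assume h: "x \<le> y" "y \<le> x" "x \<noteq> y"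
  have a: "\<not> (lc_pos (y-x) \<and> lc_pos (x-y))" using pos_not_both[of "y - x", unfolded minus_diff_eq] .
  have "lc_pos (y-x)" using h unfolding less_eq_lc_def unfolding less_lc_def by simp
  moreover have "lc_pos (x-y)" using h unfolding less_eq_lc_def unfolding less_lc_def by auto
  ultimately show False using a by simp
qed
lemma l_lin: "(x::lc) \<le> y \<or> y \<le> x"
proof (cases "x = y")
  case True thus ?thesis unfolding less_eq_lc_def by simp
next
  case False hence "y - x \<noteq> 0" by simp
  hence "lc_pos (y-x) \<or> lc_pos (x - y)" using pos_trich[of "y - x", unfolded minus_diff_eq] by simp
  thus ?thesis unfolding less_eq_lc_def unfolding less_lc_def by blast
qed
lemma l_mono: "(x::lc) \<le> y \<Longrightarrow> z + x \<le> z + y"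
proof -
  assume h: "x \<le> y"
  have e: "z + y - (z + x) = y - x" by simp
  show ?thesis
  proof (cases "x = y")
    case True thus ?thesis unfolding less_eq_lc_def by simp
  next
    case False
    hence "lc_pos (y - x)" using h unfolding less_eq_lc_def unfolding less_lc_def by simp
    hence "lc_pos (z + y - (z + x))" by (simp only: e)
    thus ?thesis unfolding less_eq_lc_def unfolding less_lc_def by simp
  qed
qed
instance lc :: linordered_ab_group_add
proof
  fix x y z :: lc
  show "(x < y) = (x \<le> y \<and> \<not> y \<le> x)" by (rule l_lenle)
  show "x \<le> x" unfolding less_eq_lc_def by (rule disjI2, rule refl)
  show "x \<le> y \<Longrightarrow> y \<le> z \<Longrightarrow> x \<le> z" by (rule l_trans)
  show "x \<le> y \<Longrightarrow> y \<le> x \<Longrightarrow> x = y" by (rule l_antisym)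
  show "x \<le> y \<or> y \<le> x" by (rule l_lin)
  show "x \<le> y \<Longrightarrow> z + x \<le> z + y" by (rule l_mono)
qed

lemma pos_iff: "0 < x \<longleftrightarrow> lc_pos x" unfolding less_lc_def by simp

lemma lead_pos: assumes "lc_coeff z q > 0" "\<forall>p<q. lc_coeff z p = 0" shows "0 < z"
  unfolding pos_iff pos_def2 using assms by blast

lemma lead_neg: assumes "lc_coeff z q < 0" "\<forall>p<q. lc_coeff z p = 0" shows "z < 0"
proof -
  have "0 < -z" by (rule lead_pos[of _ q]) (use assms in auto)
  thus ?thesis by simp
qed

lemma pos_lead_coeff: assumes "0 < y" "lc_coeff y q \<noteq> 0" "\<forall>p<q. lc_coeff y p = 0" shows "lc_coeff y q > 0"
proof (rule ccontr)
  assume "\<not> lc_coeff y q > 0"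
  hence "lc_coeff y q < 0" using assms(2) by simp
  hence "y < 0" using lead_neg assms(3) by blast
  thus False using assms(1) by simp
qed

lemma abs_lc: "\<bar>x::lc\<bar> = (if x < 0 then -x else x)" by (simp add: abs_lc_def)

lemma abs_less_lc: "\<bar>x::lc\<bar> < e \<longleftrightarrow> x < e \<and> -x < e"
proof (cases "x < 0")
  case True
  hence a: "\<bar>x\<bar> = -x" by (simp add: abs_lc)
  have b: "0 < -x" using True by simp
  show ?thesis
  proof
    assume "\<bar>x\<bar> < e" hence c: "-x < e" using a by simp
    hence "0 < e" using b by (rule less_trans[rotated])
    hence "x < e" using True by (rule less_trans[rotated])
    thus "x < e \<and> -x < e" using c by simp
  qed (use a in simp)
next
  case False
  hence a: "\<bar>x\<bar> = x" by (simp add: abs_lc)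
  have b: "-x \<le> x" using False by simp
  show ?thesis
  proof
    assume "\<bar>x\<bar> < e" hence c: "x < e" using a by simp
    thus "x < e \<and> -x < e" using b le_less_trans by blast
  qed (use a in simp)
qed

lemma abs_cases_lc: "\<bar>x::lc\<bar> = x \<or> \<bar>x\<bar> = -x" by (simp add: abs_lc)

lemma abs_nonneg_lc: "0 \<le> \<bar>x::lc\<bar>" by (simp add: abs_lc not_less less_imp_le)

lemma abs_pos_lc: "x \<noteq> 0 \<Longrightarrow> 0 < \<bar>x::lc\<bar>"
  by (cases "x < 0") (auto simp: abs_lc)

definition vb :: "rat \<Rightarrow> lc \<Rightarrow> bool" where "vb r x \<longleftrightarrow> (\<forall>q<r. lc_coeff x q = 0)"

lemma vb_0[simp]: "vb r 0" by (simp add: vb_def)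
lemma vb_add: "vb r x \<Longrightarrow> vb r y \<Longrightarrow> vb r (x+y)" by (simp add: vb_def)
lemma vb_diff: "vb r x \<Longrightarrow> vb r y \<Longrightarrow> vb r (x-y)" by (simp add: vb_def)
lemma vb_uminus: "vb r x \<Longrightarrow> vb r (-x)" by (simp add: vb_def)
lemma vb_uminus_iff[simp]: "vb r (-x) \<longleftrightarrow> vb r x" by (simp add: vb_def)
lemma vb_mono: "vb r x \<Longrightarrow> r' \<le> r \<Longrightarrow> vb r' x" by (simp add: vb_def)
lemma vb_all: "(\<And>r. vb r x) \<Longrightarrow> x = 0"
proof (rule lc_ext)
  fix q assume "\<And>r. vb r x"
  hence "vb (q+1) x" .
  thus "lc_coeff x q = lc_coeff 0 q" by (simp add: vb_def)
qed
lemma vb_sum: "(\<And>i. i \<in> F \<Longrightarrow> vb r (f i)) \<Longrightarrow> vb r (sum f F)"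
  by (induction F rule: infinite_finite_induct) (auto intro: vb_add)

lift_definition lmono :: "rat \<Rightarrow> lc" is "\<lambda>r q. if q = r then 1 else 0"
proof -
  fix r s :: rat
  show "finite {q. (if q = r then 1 else 0::real) \<noteq> 0 \<and> q < s}"
    by (rule finite_subset[of _ "{r}"]) auto
qed

lemma lmono_coeff[simp]: "lc_coeff (lmono r) q = (if q = r then 1 else 0)" by transfer simp

lemma lmono_pos: "0 < lmono r" by (rule lead_pos[of _ r]) auto

lemma vb_lt: assumes "lc_coeff e q > 0" "\<forall>p<q. lc_coeff e p = 0" "vb r y" "q < r"
  shows "y < e"
proof -
  have "0 < e - y" by (rule lead_pos[of _ q]) (use assms in \<open>auto simp: vb_def\<close>)
  thus ?thesis by simp
qed

lemma vb_abs_lt: assumes "lc_coeff e q > 0" "\<forall>p<q. lc_coeff e p = 0" "vb r y" "q < r"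
  shows "\<bar>y\<bar> < e"
  unfolding abs_less_lc using vb_lt[OF assms(1,2) _ assms(4)] assms(3) by simp

lemma pos_lead_ex: assumes "0 < e" shows "\<exists>q. lc_coeff e q > 0 \<and> (\<forall>p<q. lc_coeff e p = 0)"
  using assms unfolding pos_iff pos_def2 by blast

lemma small_lt: assumes "0 < e" shows "\<exists>r. \<forall>y. vb r y \<longrightarrow> \<bar>y\<bar> < e"
proof -
  obtain q where q: "lc_coeff e q > 0" "\<forall>p<q. lc_coeff e p = 0" using pos_lead_ex[OF assms] by blast
  show ?thesis using vb_abs_lt[OF q, of "q+1"] by auto
qed

lemma lt_lmono_vb: assumes "\<bar>x\<bar> < lmono r" shows "vb r x"
proof (rule ccontr)
  assume "\<not> vb r x"
  then obtain p where p: "p < r" "lc_coeff x p \<noteq> 0" unfolding vb_def by blast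
  hence "x \<noteq> 0" by auto
  then obtain q where q: "lc_coeff x q \<noteq> 0" "\<forall>p<q. lc_coeff x p = 0" using lc_lead by blast
  have "q \<le> p" using q p by (meson not_le)
  hence qr: "q < r" using p by simp
  define y where "y = \<bar>x\<bar>"
  have yc: "lc_coeff y q \<noteq> 0" "\<forall>p<q. lc_coeff y p = 0"
    using abs_cases_lc[of x] q unfolding y_def by auto
  have "0 < y" unfolding y_def using \<open>x \<noteq> 0\<close> by (rule abs_pos_lc)
  hence ypos: "lc_coeff y q > 0" using pos_lead_coeff yc by blast
  have "lmono r - y < 0"
    by (rule lead_neg[of _ q]) (use yc ypos qr in auto)
  hence "lmono r < y" by simp
  thus False using assms unfolding y_def by simp
qed

lemma tendsto_vb: "lc_tendsto a L \<longleftrightarrow> (\<forall>r. \<exists>N. \<forall>n\<ge>N. vb r (a n - L))"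
proof
  assume h: "lc_tendsto a L"
  show "\<forall>r. \<exists>N. \<forall>n\<ge>N. vb r (a n - L)"
  proof
    fix r
    obtain N where "\<forall>n\<ge>N. \<bar>a n - L\<bar> < lmono r" using h lmono_pos unfolding lc_tendsto_def by blast
    thus "\<exists>N. \<forall>n\<ge>N. vb r (a n - L)" using lt_lmono_vb by blast
  qed
next
  assume h: "\<forall>r. \<exists>N. \<forall>n\<ge>N. vb r (a n - L)"
  show "lc_tendsto a L" unfolding lc_tendsto_def
  proof (intro allI impI)
    fix e :: lc assume "0 < e"
    then obtain r where r: "\<forall>y. vb r y \<longrightarrow> \<bar>y\<bar> < e" using small_lt by blast
    obtain N where "\<forall>n\<ge>N. vb r (a n - L)" using h by blast
    thus "\<exists>N. \<forall>n\<ge>N. \<bar>a n - L\<bar> < e" using r by blast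
  qed
qed

lemma sums_vb: "lc_sums a s \<longleftrightarrow> (\<forall>r. \<exists>N. \<forall>n\<ge>N. vb r (lc_psum a n - s))"
  unfolding lc_sums_def tendsto_vb ..

lemma tendsto_unique: assumes "lc_tendsto a L" "lc_tendsto a L'" shows "L = L'"
proof -
  have "vb r (L - L')" for r
  proof -
    obtain N1 where N1: "\<forall>n\<ge>N1. vb r (a n - L)" using assms(1) tendsto_vb by blast
    obtain N2 where N2: "\<forall>n\<ge>N2. vb r (a n - L')" using assms(2) tendsto_vb by blast
    have "vb r ((a (max N1 N2) - L') - (a (max N1 N2) - L))" by (rule vb_diff) (use N1 N2 in auto)
    thus ?thesis by simp
  qed
  hence "L - L' = 0" by (rule vb_all)
  thus ?thesis by simp
qed

lemma sums_unique: "lc_sums a s \<Longrightarrow> lc_sums a t \<Longrightarrow> s = t"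
  unfolding lc_sums_def by (rule tendsto_unique)

lemma suminf_eq: "lc_sums a s \<Longrightarrow> lc_suminf a = s"
  unfolding lc_suminf_def by (rule the_equality) (auto intro: sums_unique)

lemma summable_sums: "lc_summable a \<Longrightarrow> lc_sums a (lc_suminf a)"
  unfolding lc_summable_def using suminf_eq by metis

lemma psum_sum: "lc_psum a n = (\<Sum>k<n. a k)" by (induction n) auto

section \<open>Completeness\<close>

lemma cauchy_conv:
  fixes s :: "nat \<Rightarrow> lc"
  assumes "\<forall>r. \<exists>N. \<forall>n\<ge>N. vb r (s n - s N)"
  shows "\<exists>L. lc_tendsto s L"
proof -
  obtain N where N: "\<And>r n. n \<ge> N r \<Longrightarrow> vb r (s n - s (N r))" using assms by metis
  have agree: "lc_coeff (s n) q = lc_coeff (s (N r)) q" if "n \<ge> N r" "q < r" for n r q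
    using N[OF that(1)] that(2) by (simp add: vb_def)
  define f where "f q = lc_coeff (s (N (q+1))) q" for q
  have fN: "f q = lc_coeff (s (N r)) q" if "q < r" for q r
  proof -
    define M where "M = max (N r) (N (q+1))"
    have "lc_coeff (s M) q = lc_coeff (s (N r)) q" using agree[of r M q] that unfolding M_def by simp
    moreover have "lc_coeff (s M) q = lc_coeff (s (N (q+1))) q" using agree[of "q+1" M q] unfolding M_def by simp
    ultimately show ?thesis unfolding f_def by simp
  qed
  have fin: "finite {q. f q \<noteq> 0 \<and> q < r}" for r
  proof -
    have "{q. f q \<noteq> 0 \<and> q < r} = {q. lc_coeff (s (N r)) q \<noteq> 0 \<and> q < r}" using fN by auto
    thus ?thesis using lc_finite by simp
  qed
  define L where "L = Abs_lc f"
  have Lc: "lc_coeff L = f" unfolding L_def by (rule Abs_lc_inverse) (use fin in simp)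
  have "lc_tendsto s L" unfolding tendsto_vb
  proof
    fix r show "\<exists>M. \<forall>n\<ge>M. vb r (s n - L)"
      by (rule exI[of _ "N r"]) (auto simp: vb_def Lc fN agree)
  qed
  thus ?thesis by blast
qed

lemma vb_psum_tail: assumes "\<forall>n\<ge>N. vb r (a n)" "n \<ge> N" shows "vb r (lc_psum a n - lc_psum a N)"
  using assms(2)
proof (induction n)
  case 0 thus ?case by simp
next
  case (Suc n)
  show ?case
  proof (cases "Suc n = N")
    case True thus ?thesis by simp
  next
    case False
    hence nN: "n \<ge> N" using Suc.prems by simp
    have "vb r (lc_psum a n - lc_psum a N + a n)" by (rule vb_add) (use Suc.IH assms(1) nN in auto)
    thus ?thesis by (simp add: algebra_simps)
  qed
qed

lemma summable_null: assumes "\<forall>r. \<exists>N. \<forall>n\<ge>N. vb r (a n)" shows "\<exists>s. lc_sums a s"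
proof -
  have "\<forall>r. \<exists>N. \<forall>n\<ge>N. vb r (lc_psum a n - lc_psum a N)"
    using assms vb_psum_tail by blast
  thus ?thesis using cauchy_conv unfolding lc_sums_def by blast
qed

lemma sums_null: assumes "lc_sums a s" shows "\<exists>N. \<forall>n\<ge>N. vb r (a n)"
proof -
  obtain N where N: "\<forall>n\<ge>N. vb r (lc_psum a n - s)" using assms sums_vb by blast
  have "vb r ((lc_psum a (Suc n) - s) - (lc_psum a n - s))" if "n \<ge> N" for n
    by (rule vb_diff) (use N that in \<open>auto simp del: lc_psum.simps\<close>)
  thus ?thesis by auto
qed

lemma vb_le: assumes "0 \<le> y" "y \<le> x" "vb r x" shows "vb r y"
proof (rule ccontr)
  assume "\<not> vb r y"
  then obtain p where p: "p < r" "lc_coeff y p \<noteq> 0" unfolding vb_def by blast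
  hence "y \<noteq> 0" by auto
  then obtain q where q: "lc_coeff y q \<noteq> 0" "\<forall>p<q. lc_coeff y p = 0" using lc_lead by blast
  have "q \<le> p" using q p by (meson not_le)
  hence qr: "q < r" using p by simp
  have yq: "lc_coeff y q > 0" using pos_lead_coeff q assms(1) \<open>y \<noteq> 0\<close> by simp
  have "x - y < 0"
    by (rule lead_neg[of _ q]) (use q yq qr assms(3) in \<open>auto simp: vb_def\<close>)
  thus False using assms(2) by simp
qed

lemma psum_add: "lc_psum (\<lambda>n. a n + b n) n = lc_psum a n + lc_psum b n"
  by (induction n) (auto simp: algebra_simps)

lemma sums_add: assumes "lc_sums a s" "lc_sums b t" shows "lc_sums (\<lambda>n. a n + b n) (s + t)"
  unfolding sums_vb
proof
  fix r
  obtain N1 where N1: "\<forall>n\<ge>N1. vb r (lc_psum a n - s)" using assms(1) sums_vb by blast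
  obtain N2 where N2: "\<forall>n\<ge>N2. vb r (lc_psum b n - t)" using assms(2) sums_vb by blast
  have "vb r (lc_psum (\<lambda>n. a n + b n) n - (s + t))" if "n \<ge> max N1 N2" for n
  proof -
    have "vb r ((lc_psum a n - s) + (lc_psum b n - t))" by (rule vb_add) (use N1 N2 that in auto)
    thus ?thesis by (simp add: psum_add algebra_simps)
  qed
  thus "\<exists>N. \<forall>n\<ge>N. vb r (lc_psum (\<lambda>n. a n + b n) n - (s + t))" by blast
qed

lemma tendsto_ge: assumes "lc_tendsto f L" "\<forall>n\<ge>N. x \<le> f n" shows "x \<le> L"
proof (rule ccontr)
  assume "\<not> x \<le> L"
  hence e: "0 < x - L" by simp
  obtain r where r: "\<forall>y. vb r y \<longrightarrow> \<bar>y\<bar> < x - L" using small_lt[OF e] by blast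
  obtain M where M: "\<forall>n\<ge>M. vb r (f n - L)" using assms(1) tendsto_vb by blast
  have "\<bar>f (max M N) - L\<bar> < x - L" using r M by simp
  hence "f (max M N) < x" unfolding abs_less_lc by simp
  moreover have "x \<le> f (max M N)" using assms(2) by simp
  ultimately show False by simp
qed

lemma tendsto_le: assumes "lc_tendsto f L" "\<forall>n\<ge>N. f n \<le> x" shows "L \<le> x"
proof (rule ccontr)
  assume "\<not> L \<le> x"
  hence e: "0 < L - x" by simp
  obtain r where r: "\<forall>y. vb r y \<longrightarrow> \<bar>y\<bar> < L - x" using small_lt[OF e] by blast
  obtain M where M: "\<forall>n\<ge>M. vb r (f n - L)" using assms(1) tendsto_vb by blast
  have "\<bar>f (max M N) - L\<bar> < L - x" using r M by simp
  hence "x < f (max M N)" unfolding abs_less_lc by simp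
  moreover have "f (max M N) \<le> x" using assms(2) by simp
  ultimately show False by simp
qed

lemma psum_interleave:
  "lc_psum (\<lambda>n. if even n then f (n div 2) else g (n div 2)) (2*k) = lc_psum f k + lc_psum g k \<and>
   lc_psum (\<lambda>n. if even n then f (n div 2) else g (n div 2)) (2*k+1) = lc_psum f (Suc k) + lc_psum g k"
proof (induction k)
  case 0 thus ?case by simp
next
  case (Suc k)
  have a: "2 * Suc k = Suc (2*k+1)" by simp
  have b: "2 * Suc k + 1 = Suc (Suc (2*k+1))" by simp
  show ?case using Suc unfolding a b by (simp add: algebra_simps)
qed

lemma sums_interleave: assumes "lc_sums f s" "lc_sums g t"
  shows "lc_sums (\<lambda>n. if even n then f (n div 2) else g (n div 2)) (s + t)"
  unfolding sums_vb
proof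
  fix r
  obtain N1 where N1: "\<forall>n\<ge>N1. vb r (lc_psum f n - s)" using assms(1) sums_vb by blast
  obtain N2 where N2: "\<forall>n\<ge>N2. vb r (lc_psum g n - t)" using assms(2) sums_vb by blast
  define N where "N = 2 * max N1 N2"
  have "vb r (lc_psum (\<lambda>n. if even n then f (n div 2) else g (n div 2)) n - (s + t))" if "n \<ge> N" for n
  proof (cases "even n")
    case True
    then obtain k where k: "n = 2*k" by (auto elim: evenE)
    hence kk: "k \<ge> N1" "k \<ge> N2" using that unfolding N_def by auto
    have "vb r ((lc_psum f k - s) + (lc_psum g k - t))" by (rule vb_add) (use N1 N2 kk in auto)
    thus ?thesis using psum_interleave[of f g k] k by (simp add: algebra_simps)
  next
    case False
    then obtain k where k: "n = 2*k+1" by (auto elim: oddE)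
    hence kk: "k \<ge> N1" "k \<ge> N2" using that unfolding N_def by auto
    have "vb r ((lc_psum f (Suc k) - s) + (lc_psum g k - t))" by (rule vb_add) (use N1 N2 kk in \<open>auto simp del: lc_psum.simps\<close>)
    thus ?thesis using psum_interleave[of f g k] k by (simp add: algebra_simps)
  qed
  thus "\<exists>N. \<forall>n\<ge>N. vb r (lc_psum (\<lambda>n. if even n then f (n div 2) else g (n div 2)) n - (s + t))" by blast
qed


lemma lin1: "(a::'a::linordered_ab_group_add) \<le> b \<Longrightarrow> Q - P = b - a \<Longrightarrow> P \<le> Q"
  by (metis diff_ge_0_iff_ge)
lemma lin1s: "(a::'a::linordered_ab_group_add) < b \<Longrightarrow> Q - P = b - a \<Longrightarrow> P < Q"
  by (metis diff_gt_0_iff_gt)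
lemma lin2: "(a::'a::linordered_ab_group_add) \<le> b \<Longrightarrow> c \<le> d \<Longrightarrow> Q - P = (b - a) + (d - c) \<Longrightarrow> P \<le> Q"
proof -
  assume h: "a \<le> b" "c \<le> d" "Q - P = (b - a) + (d - c)"
  have "0 \<le> (b - a) + (d - c)" using h by (simp add: add_nonneg_nonneg)
  hence "0 \<le> Q - P" by (simp only: h(3))
  thus ?thesis by (simp only: diff_ge_0_iff_ge)
qed
lemma lin2s: "(a::'a::linordered_ab_group_add) \<le> b \<Longrightarrow> c < d \<Longrightarrow> Q - P = (b - a) + (d - c) \<Longrightarrow> P < Q"
proof -
  assume h: "a \<le> b" "c < d" "Q - P = (b - a) + (d - c)"
  have "0 < (b - a) + (d - c)" using h by (simp add: add_nonneg_pos)
  hence "0 < Q - P" by (simp only: h(3))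
  thus ?thesis by (simp only: diff_gt_0_iff_gt)
qed

lemma lin3: "(a::'a::linordered_ab_group_add) \<le> b \<Longrightarrow> c \<le> d \<Longrightarrow> u \<le> v \<Longrightarrow> Q - P = (b - a) + (d - c) + (v - u) \<Longrightarrow> P \<le> Q"
proof -
  assume h: "a \<le> b" "c \<le> d" "u \<le> v" "Q - P = (b - a) + (d - c) + (v - u)"
  have "0 \<le> (b - a) + (d - c) + (v - u)" using h by (simp add: add_nonneg_nonneg)
  hence "0 \<le> Q - P" by (simp only: h(4))
  thus ?thesis by (simp only: diff_ge_0_iff_ge)
qed

lift_definition lsc :: "real \<Rightarrow> lc \<Rightarrow> lc" is "\<lambda>c x q. c * x q"
proof -
  fix c :: real and x :: "rat \<Rightarrow> real" and r :: rat
  assume "\<And>r. finite {q. x q \<noteq> 0 \<and> q < r}"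
  thus "finite {q. c * x q \<noteq> 0 \<and> q < r}"
    by (rule finite_subset[rotated]) auto
qed

lemma lsc_coeff[simp]: "lc_coeff (lsc c x) q = c * lc_coeff x q" by transfer simp

lemma lsc_pos: assumes "0 < c" "0 < x" shows "0 < lsc c x"
proof -
  obtain q where q: "lc_coeff x q > 0" "\<forall>p<q. lc_coeff x p = 0" using pos_lead_ex[OF assms(2)] by blast
  show ?thesis by (rule lead_pos[of _ q]) (use q assms(1) in auto)
qed

lemma lsc_one[simp]: "lsc 1 x = x" by (rule lc_ext) simp

lemma lsc_diff_same: "x - lsc c x = lsc (1 - c) x" by (rule lc_ext) (simp add: algebra_simps)

lemma lsc_le: assumes "0 \<le> c" "c \<le> 1" "0 < x" shows "lsc c x \<le> x" "0 \<le> lsc c x"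
proof -
  show "lsc c x \<le> x"
  proof (cases "c = 1")
    case False
    hence "0 < lsc (1 - c) x" using assms by (intro lsc_pos) auto
    hence "0 < x - lsc c x" using lsc_diff_same[of x c] by simp
    thus ?thesis by (simp only: diff_gt_0_iff_gt less_imp_le)
  qed simp
  show "0 \<le> lsc c x"
  proof (cases "c = 0")
    case True
    have "lsc c x = 0" by (rule lc_ext) (simp add: True)
    thus ?thesis by simp
  next
    case False thus ?thesis using assms lsc_pos[of c x] by simp
  qed
qed

lift_definition trunc :: "rat \<Rightarrow> lc \<Rightarrow> lc" is "\<lambda>r x q. if q \<le> r then x q else 0"
proof -
  fix r s :: rat and x :: "rat \<Rightarrow> real"
  assume "\<And>r. finite {q. x q \<noteq> 0 \<and> q < r}"
  thus "finite {q. (if q \<le> r then x q else 0) \<noteq> 0 \<and> q < s}"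
    by (rule finite_subset[rotated]) auto
qed

lemma trunc_coeff[simp]: "lc_coeff (trunc r x) q = (if q \<le> r then lc_coeff x q else 0)" by transfer simp

lemma trunc_zero[simp]: "trunc r 0 = 0" by (rule lc_ext) simp
lemma trunc_add: "trunc r (x + y) = trunc r x + trunc r y" by (rule lc_ext) simp
lemma trunc_diff: "trunc r (x - y) = trunc r x - trunc r y" by (rule lc_ext) simp
lemma trunc_idem[simp]: "trunc r (trunc r x) = trunc r x" by (rule lc_ext) simp
lemma trunc_lsc: "trunc r (lsc c x) = lsc c (trunc r x)" by (rule lc_ext) simp
lemma trunc_lmono[simp]: "trunc r (lmono r) = lmono r" by (rule lc_ext) simp
lemma trunc_sum: "trunc r (sum f F) = (\<Sum>i\<in>F. trunc r (f i))"
  by (induction F rule: infinite_finite_induct) (auto simp: trunc_add)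
  
lemma trunc_vb: assumes "vb s z" "r < s" shows "trunc r z = 0"
  by (rule lc_ext) (use assms in \<open>auto simp: vb_def\<close>)

lemma trunc_nonneg: assumes "0 \<le> z" shows "0 \<le> trunc r z"
proof (cases "z = 0")
  case True
  have "trunc r z = 0" by (rule lc_ext) (simp add: True)
  thus ?thesis by simp
next
  case False
  hence zp: "0 < z" using assms by simp
  obtain q where q: "lc_coeff z q > 0" "\<forall>p<q. lc_coeff z p = 0" using pos_lead_ex[OF zp] by blast
  show ?thesis
  proof (cases "q \<le> r")
    case True
    have "0 < trunc r z" by (rule lead_pos[of _ q]) (use q True in auto)
    thus ?thesis by simp
  next
    case False
    have "trunc r z = 0" by (rule lc_ext) (use q False in auto)
    thus ?thesis by simp
  qed
qed

lemma trunc_mono: assumes "x \<le> y" shows "trunc r x \<le> trunc r y"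
proof -
  have "0 \<le> trunc r (y - x)" using assms by (intro trunc_nonneg) simp
  thus ?thesis by (simp add: trunc_diff)
qed

section \<open>Finite gap lemma\<close>

lemma gap_aux:
  fixes \<alpha> \<beta> :: "'i \<Rightarrow> lc"
  assumes "card F = n" "finite F" "\<forall>i\<in>F. \<alpha> i \<le> \<beta> i" "0 < e" "(\<Sum>i\<in>F. \<beta> i - \<alpha> i) + e \<le> B - A"
  shows "\<exists>x. A \<le> x \<and> x + lsc (1 / (real n + 1)) e \<le> B \<and>
     (\<forall>i\<in>F. \<beta> i \<le> x \<or> x + lsc (1 / (real n + 1)) e \<le> \<alpha> i) \<and> (x = A \<or> (\<exists>i\<in>F. x = \<beta> i))"
  using assms
proof (induction n arbitrary: F A e)
  case 0
  hence F: "F = {}" by simp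
  hence "e \<le> B - A" using 0 by simp
  hence "A + e \<le> B" by (simp add: le_diff_eq add.commute)
  thus ?case using F by (intro exI[of _ A]) simp
next
  case (Suc k)
  have Fne: "F \<noteq> {}" using Suc.prems(1) by auto
  define m where "m = Min (\<alpha> ` F)"
  have "m \<in> \<alpha> ` F" unfolding m_def using Suc.prems(2) Fne by simp
  then obtain i0 where i0: "i0 \<in> F" "\<alpha> i0 = m" by blast
  have i0min: "\<alpha> i0 \<le> \<alpha> i" if "i \<in> F" for i
    unfolding i0(2) m_def using Suc.prems(2) that by simp
  define g where "g = lsc (1 / (real (Suc k) + 1)) e"
  have g0: "0 \<le> g" "g \<le> e" unfolding g_def using lsc_le[OF _ _ Suc.prems(4), of "1 / (real (Suc k) + 1)"] by auto
  have S0: "0 \<le> (\<Sum>i\<in>F. \<beta> i - \<alpha> i)" using Suc.prems(3) by (intro sum_nonneg) simp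
  show ?case
  proof (cases "A + g \<le> \<alpha> i0")
    case True
    have "A + g \<le> B"
      by (rule lin3[OF S0 g0(2) Suc.prems(5)]) (simp add: algebra_simps)
    moreover have "\<forall>i\<in>F. \<beta> i \<le> A \<or> A + g \<le> \<alpha> i" using True i0min order_trans by blast
    ultimately show ?thesis unfolding g_def by (intro exI[of _ A]) auto
  next
    case False
    hence a0: "\<alpha> i0 < A + g" by simp
    define F' where "F' = F - {i0}"
    have cF': "card F' = k" "finite F'" using Suc.prems(1,2) i0(1) unfolding F'_def by auto
    define A' where "A' = max A (\<beta> i0)"
    define e' where "e' = e - g"
    have e'eq: "e' = lsc (1 - 1 / (real (Suc k) + 1)) e" unfolding e'_def g_def by (rule lsc_diff_same)
    have e'pos: "0 < e'" unfolding e'eq by (rule lsc_pos) (use Suc.prems(4) in auto)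
    have cc: "1 / (real k + 1) * (1 - 1 / (real (Suc k) + 1)) = 1 / (real (Suc k) + 1)"
      by (simp add: field_simps)
    have gg: "lsc (1 / (real k + 1)) e' = g" unfolding e'eq g_def
      by (rule lc_ext) (simp only: lsc_coeff mult.assoc[symmetric] cc)
    have Ssplit: "(\<Sum>i\<in>F. \<beta> i - \<alpha> i) = (\<beta> i0 - \<alpha> i0) + (\<Sum>i\<in>F'. \<beta> i - \<alpha> i)"
      unfolding F'_def using Suc.prems(2) i0(1) by (rule sum.remove)
    have b0: "\<alpha> i0 \<le> \<beta> i0" using Suc.prems(3) i0(1) by simp
    have S'0: "0 \<le> (\<Sum>i\<in>F'. \<beta> i - \<alpha> i)" using Suc.prems(3) unfolding F'_def by (intro sum_nonneg) simp
    have hyp: "(\<Sum>i\<in>F'. \<beta> i - \<alpha> i) + e' \<le> B - A'"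
    proof (cases "A \<le> \<beta> i0")
      case True
      hence AA: "A' = \<beta> i0" unfolding A'_def by simp
      have "(\<Sum>i\<in>F'. \<beta> i - \<alpha> i) + e' < B - A'"
        by (rule lin2s[OF Suc.prems(5) a0]) (simp add: AA Ssplit e'_def algebra_simps)
      thus ?thesis by simp
    next
      case False
      hence AA: "A' = A" unfolding A'_def by simp
      show ?thesis
        by (rule lin3[OF Suc.prems(5) b0 g0(1)]) (simp add: AA Ssplit e'_def algebra_simps)
    qed
    obtain x where x: "A' \<le> x" "x + lsc (1 / (real k + 1)) e' \<le> B"
      "\<forall>i\<in>F'. \<beta> i \<le> x \<or> x + lsc (1 / (real k + 1)) e' \<le> \<alpha> i" "x = A' \<or> (\<exists>i\<in>F'. x = \<beta> i)"
      using Suc.IH[OF cF' _ e'pos hyp] Suc.prems(3) unfolding F'_def by auto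
    have "A \<le> x" "\<beta> i0 \<le> x" using x(1) unfolding A'_def by auto
    moreover have "\<forall>i\<in>F. \<beta> i \<le> x \<or> x + g \<le> \<alpha> i" using x(3) \<open>\<beta> i0 \<le> x\<close> unfolding gg F'_def by auto
    moreover have "x = A \<or> (\<exists>i\<in>F. x = \<beta> i)"
    proof (cases "x = A'")
      case True
      have "A' = A \<or> A' = \<beta> i0" unfolding A'_def by (simp add: max_def)
      thus ?thesis using True i0(1) by blast
    next
      case False thus ?thesis using x(4) unfolding F'_def by blast
    qed
    ultimately show ?thesis using x(2) unfolding gg g_def by blast
  qed
qed


section \<open>Heine-Borel type lemma\<close>

lemma HB:
  assumes ab: "a < b" and ord: "\<forall>m. \<alpha> m \<le> \<beta> m" and sm: "lc_sums (\<lambda>m. \<beta> m - \<alpha> m) \<sigma>"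
    and cov: "\<forall>x. a < x \<and> x < b \<longrightarrow> (\<exists>m. \<alpha> m \<le> x \<and> x \<le> \<beta> m)"
  shows "b - a \<le> \<sigma>"
proof (rule ccontr)
  assume "\<not> b - a \<le> \<sigma>"
  hence dpos: "0 < b - a - \<sigma>" by simp
  define \<delta> where "\<delta> = b - a - \<sigma>"
  obtain q where q: "lc_coeff \<delta> q > 0" "\<forall>p<q. lc_coeff \<delta> p = 0" using pos_lead_ex dpos unfolding \<delta>_def by blast
  define c where "c = lc_coeff \<delta> q"
  have cpos: "0 < c" using q unfolding c_def by simp
  define l where "l = (\<lambda>m. \<beta> m - \<alpha> m)"
  obtain N where N: "\<forall>m\<ge>N. vb (q+1) (l m)" using sums_null[OF sm] unfolding l_def by blast
  obtain N' where N': "\<forall>n\<ge>N'. vb (q+1) (lc_psum l n - \<sigma>)" using sm sums_vb unfolding l_def by blast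
  define M where "M = max N N'"
  have "vb (q+1) ((lc_psum l M - lc_psum l N) - (lc_psum l M - \<sigma>))"
    by (rule vb_diff) (use vb_psum_tail[OF N, of M] N' in \<open>auto simp: M_def\<close>)
  hence tailvb: "vb (q+1) (\<sigma> - lc_psum l N)" by simp
  define T where "T = trunc q"
  have Tsig: "T \<sigma> = T (lc_psum l N)"
  proof -
    have "T (\<sigma> - lc_psum l N) = 0" unfolding T_def by (rule trunc_vb[OF tailvb]) simp
    thus ?thesis unfolding T_def trunc_diff by simp
  qed
  have Tpsum: "T (lc_psum l N) = (\<Sum>m<N. T (\<beta> m) - T (\<alpha> m))"
    unfolding psum_sum T_def trunc_sum l_def trunc_diff ..
  have Tdel: "T \<delta> = lsc c (lmono q)"
    unfolding T_def by (rule lc_ext) (use q in \<open>auto simp: c_def\<close>)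
  define e where "e = lsc c (lmono q)"
  have epos: "0 < e" unfolding e_def using cpos lmono_pos by (rule lsc_pos)
  have bsplit: "b - a = \<sigma> + \<delta>" unfolding \<delta>_def by simp
  have eq: "(\<Sum>m<N. T (\<beta> m) - T (\<alpha> m)) + e = T b - T a"
  proof -
    have "T b - T a = T (b - a)" unfolding T_def trunc_diff ..
    also have "\<dots> = T \<sigma> + T \<delta>" unfolding bsplit T_def trunc_add ..
    finally show ?thesis using Tsig Tpsum Tdel unfolding e_def by simp
  qed
  have Tord: "\<forall>i\<in>{..<N}. T (\<alpha> i) \<le> T (\<beta> i)" using ord unfolding T_def by (simp add: trunc_mono)
  define g where "g = lsc (1 / (real N + 1)) e"
  obtain x where x: "T a \<le> x" "x + g \<le> T b"
     "\<forall>i\<in>{..<N}. T (\<beta> i) \<le> x \<or> x + g \<le> T (\<alpha> i)" "x = T a \<or> (\<exists>i\<in>{..<N}. x = T (\<beta> i))"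
    using gap_aux[of "{..<N}" N "\<lambda>i. T (\<alpha> i)" "\<lambda>i. T (\<beta> i)" e "T b" "T a"] Tord epos eq
    unfolding g_def by auto
  have Tx: "T x = x" using x(4) unfolding T_def by auto
  define \<kappa> where "\<kappa> = c / (real N + 1)"
  have kpos: "0 < \<kappa>" unfolding \<kappa>_def using cpos by simp
  have geq: "g = lsc \<kappa> (lmono q)" unfolding g_def e_def \<kappa>_def by (rule lc_ext) simp
  define z where "z t = x + lsc t (lmono q)" for t
  have inj: "inj_on z {0<..<\<kappa>}"
  proof (rule inj_onI)
    fix s t assume "z s = z t"
    hence "lc_coeff (z s) q = lc_coeff (z t) q" by simp
    thus "s = t" unfolding z_def by simp
  qed
  have sub: "z ` {0<..<\<kappa>} \<subseteq> range (\<lambda>m. T (\<alpha> m))"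
  proof
    fix y assume "y \<in> z ` {0<..<\<kappa>}"
    then obtain t where t: "0 < t" "t < \<kappa>" "y = z t" by auto
    have z1: "x < z t" unfolding z_def using lsc_pos[OF t(1) lmono_pos, of q] by simp
    have E: "x + g - z t = lsc (\<kappa> - t) (lmono q)" unfolding geq z_def by (rule lc_ext) (simp add: algebra_simps)
    have P: "0 < lsc (\<kappa> - t) (lmono q)" using t(2) lmono_pos by (intro lsc_pos) auto
    have "0 < x + g - z t" by (subst E) (rule P)
    hence z2: "z t < x + g" by (simp only: diff_gt_0_iff_gt)
    have Tz: "T (z t) = z t" unfolding z_def using Tx unfolding T_def by (simp add: trunc_add trunc_lsc)
    have az: "a < z t"
    proof (rule ccontr)
      assume "\<not> a < z t" hence "z t \<le> a" by simp
      hence "T (z t) \<le> T a" unfolding T_def by (rule trunc_mono)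
      thus False using Tz x(1) z1 by simp
    qed
    have zb: "z t < b"
    proof (rule ccontr)
      assume "\<not> z t < b" hence "b \<le> z t" by simp
      hence "T b \<le> T (z t)" unfolding T_def by (rule trunc_mono)
      thus False using Tz x(2) z2 by simp
    qed
    obtain m where m: "\<alpha> m \<le> z t" "z t \<le> \<beta> m" using cov az zb by blast
    have m1: "T (\<alpha> m) \<le> z t" using trunc_mono[OF m(1), of q] Tz unfolding T_def by simp
    have m2: "z t \<le> T (\<beta> m)" using trunc_mono[OF m(2), of q] Tz unfolding T_def by simp
    have "\<not> m < N"
    proof
      assume "m < N"
      hence "T (\<beta> m) \<le> x \<or> x + g \<le> T (\<alpha> m)" using x(3) by simp
      thus False using m1 m2 z1 z2 by auto
    qed
    hence "vb (q+1) (l m)" using N by simp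
    hence "T (l m) = 0" unfolding T_def by (rule trunc_vb) simp
    hence "T (\<beta> m) = T (\<alpha> m)" unfolding l_def T_def trunc_diff by simp
    hence "z t = T (\<alpha> m)" using m1 m2 by simp
    thus "y \<in> range (\<lambda>m. T (\<alpha> m))" using t(3) by simp
  qed
  have "countable (z ` {0<..<\<kappa>})" by (rule countable_subset[OF sub]) simp
  hence "countable {0<..<\<kappa>}" using inj by (rule countable_image_inj_on)
  thus False using uncountable_open_interval[of 0 \<kappa>] kpos by simp
qed


lemma dense_lc: assumes "u < (v::lc)" shows "\<exists>w. u < w \<and> w < v"
proof -
  define h where "h = lsc (1/2) (v - u)"
  have hpos: "0 < h" unfolding h_def using assms by (intro lsc_pos) auto
  have "v - (u + h) = lsc (1 - 1/2) (v - u)" unfolding h_def using lsc_diff_same[of "v - u" "1/2"]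
    by (simp add: algebra_simps)
  moreover have "0 < lsc (1 - 1/2) (v - u)" using assms by (intro lsc_pos) auto
  ultimately have "0 < v - (u + h)" by simp
  hence "u + h < v" by (simp only: diff_gt_0_iff_gt)
  moreover have "u < u + h" using hpos by simp
  ultimately show ?thesis by blast
qed

lemma int_sub: "lc_interval_ab a b S \<Longrightarrow> S \<subseteq> {a..b}"
  unfolding lc_interval_ab_def by auto
lemma int_sup: "lc_interval_ab a b S \<Longrightarrow> {a<..<b} \<subseteq> S"
  unfolding lc_interval_ab_def by auto
lemma int_lt: "lc_interval_ab a b S \<Longrightarrow> a < b"
  unfolding lc_interval_ab_def by auto

lemma int_bound: assumes "(a::lc) < b" "{a<..<b} \<subseteq> S" "S \<subseteq> {a'..b'}" shows "a' \<le> a" "b \<le> b'"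
proof -
  show "a' \<le> a"
  proof (rule ccontr)
    assume "\<not> a' \<le> a"
    hence "a < a'" by (simp add: not_le)
    hence "a < min a' b" using assms(1) by simp
    then obtain w where w: "a < w" "w < min a' b" using dense_lc by blast
    hence "w \<in> S" using assms(2) by auto
    hence "a' \<le> w" using assms(3) by auto
    thus False using w by simp (meson leD)
  qed
  show "b \<le> b'"
  proof (rule ccontr)
    assume "\<not> b \<le> b'"
    hence "b' < b" by (simp add: not_le)
    hence "max a b' < b" using assms(1) by simp
    then obtain w where w: "max a b' < w" "w < b" using dense_lc by blast
    hence "w \<in> S" using assms(2) by auto
    hence "w \<le> b'" using assms(3) by auto
    thus False using w by simp (meson leD)
  qed
qed

lemma int_unique: assumes "lc_interval_ab a b S" "lc_interval_ab a' b' S" shows "a = a'" "b = b'"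
proof -
  have "a' \<le> a" "b \<le> b'" using int_bound[OF int_lt[OF assms(1)] int_sup[OF assms(1)] int_sub[OF assms(2)]] by auto
  moreover have "a \<le> a'" "b' \<le> b" using int_bound[OF int_lt[OF assms(2)] int_sup[OF assms(2)] int_sub[OF assms(1)]] by auto
  ultimately show "a = a'" "b = b'" by auto
qed

lemma len_eq: assumes "lc_interval_ab a b S" shows "lc_len S = b - a"
  unfolding lc_len_def
proof (rule the_equality)
  show "\<exists>a' b'. lc_interval_ab a' b' S \<and> b - a = b' - a'" using assms by blast
next
  fix d assume "\<exists>a' b'. lc_interval_ab a' b' S \<and> d = b' - a'"
  then obtain a' b' where "lc_interval_ab a' b' S" "d = b' - a'" by blast
  thus "d = b - a" using int_unique[OF assms] by auto
qed

lemma closed_int: "a < b \<Longrightarrow> lc_interval_ab a b {a..b}" unfolding lc_interval_ab_def by simp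

section \<open>Generalised covers\<close>

definition gcov :: "lc set \<Rightarrow> (nat \<Rightarrow> lc) \<Rightarrow> (nat \<Rightarrow> lc) \<Rightarrow> lc \<Rightarrow> bool" where
  "gcov X \<alpha> \<beta> \<sigma> \<longleftrightarrow> (\<forall>m. \<alpha> m \<le> \<beta> m) \<and> X \<subseteq> (\<Union>m. {\<alpha> m..\<beta> m}) \<and> lc_sums (\<lambda>m. \<beta> m - \<alpha> m) \<sigma>"

lemma gcov_mono: "gcov X \<alpha> \<beta> \<sigma> \<Longrightarrow> X' \<subseteq> X \<Longrightarrow> gcov X' \<alpha> \<beta> \<sigma>"
  unfolding gcov_def by blast

lemma cover_gcov: assumes "lc_cover X S" shows "gcov X (\<lambda>m. SOME a. \<exists>b. lc_interval_ab a b (S m)) (\<lambda>m. SOME b. lc_interval_ab (SOME a. \<exists>b. lc_interval_ab a b (S m)) b (S m)) (lc_suminf (\<lambda>n. lc_len (S n)))"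
proof -
  define \<alpha> where "\<alpha> m = (SOME a. \<exists>b. lc_interval_ab a b (S m))" for m
  define \<beta> where "\<beta> m = (SOME b. lc_interval_ab (\<alpha> m) b (S m))" for m
  have ab: "lc_interval_ab (\<alpha> m) (\<beta> m) (S m)" for m
  proof -
    have "\<exists>a b. lc_interval_ab a b (S m)" using assms unfolding lc_cover_def lc_interval_def by blast
    hence "\<exists>b. lc_interval_ab (\<alpha> m) b (S m)" unfolding \<alpha>_def by (rule someI_ex)
    thus ?thesis unfolding \<beta>_def by (rule someI_ex)
  qed
  have len: "lc_len (S m) = \<beta> m - \<alpha> m" for m using len_eq[OF ab] .
  have "lc_sums (\<lambda>n. lc_len (S n)) (lc_suminf (\<lambda>n. lc_len (S n)))"
    using assms unfolding lc_cover_def by (intro summable_sums) simp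
  hence sm: "lc_sums (\<lambda>m. \<beta> m - \<alpha> m) (lc_suminf (\<lambda>n. lc_len (S n)))" unfolding len .
  have "X \<subseteq> (\<Union>m. {\<alpha> m..\<beta> m})" using assms int_sub[OF ab] unfolding lc_cover_def by blast
  moreover have "\<forall>m. \<alpha> m \<le> \<beta> m" using int_lt[OF ab] less_imp_le by blast
  ultimately show ?thesis using sm unfolding gcov_def \<alpha>_def \<beta>_def by blast
qed

lemma vb_lmono: "r \<le> s \<Longrightarrow> vb r (lmono s)" by (auto simp: vb_def)

lemma eps_seq: assumes "0 < e" shows "\<exists>\<epsilon> E. (\<forall>m. 0 < \<epsilon> m) \<and> lc_sums \<epsilon> E \<and> E < e"
proof -
  obtain q where q: "lc_coeff e q > 0" "\<forall>p<q. lc_coeff e p = 0" using pos_lead_ex[OF assms] by blast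
  define \<epsilon> where "\<epsilon> m = lmono (q + 1 + of_nat m)" for m
  have null: "\<forall>r. \<exists>N. \<forall>n\<ge>N. vb r (\<epsilon> n)"
  proof
    fix r
    obtain N where N: "r - q - 1 < of_nat N" using reals_Archimedean2 by blast
    have "vb r (\<epsilon> n)" if "n \<ge> N" for n
    proof -
      have "(of_nat N :: rat) \<le> of_nat n" using that by simp
      hence "r \<le> q + 1 + of_nat n" using N by linarith
      thus ?thesis unfolding \<epsilon>_def by (rule vb_lmono)
    qed
    thus "\<exists>N. \<forall>n\<ge>N. vb r (\<epsilon> n)" by blast
  qed
  obtain E where E: "lc_sums \<epsilon> E" using summable_null[OF null] by blast
  obtain N where N: "\<forall>n\<ge>N. vb (q+1) (lc_psum \<epsilon> n - E)" using E sums_vb by blast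
  have v1: "vb (q+1) (lc_psum \<epsilon> N)" unfolding psum_sum by (rule vb_sum) (simp add: \<epsilon>_def vb_lmono)
  have "vb (q+1) (lc_psum \<epsilon> N - (lc_psum \<epsilon> N - E))" by (rule vb_diff) (use N v1 in auto)
  hence "vb (q+1) E" by simp
  hence "E < e" using vb_lt[OF q, of "q+1" E] by simp
  moreover have "\<forall>m. 0 < \<epsilon> m" unfolding \<epsilon>_def using lmono_pos by blast
  ultimately show ?thesis using E by blast
qed

lemma gcov_lower: assumes inf: "lc_is_inf MA (lc_cover_sums A)" and g: "gcov A \<alpha> \<beta> \<sigma>" shows "MA \<le> \<sigma>"
proof (rule ccontr)
  assume "\<not> MA \<le> \<sigma>"
  hence "0 < MA - \<sigma>" by simp
  then obtain \<epsilon> E where eps: "\<forall>m. 0 < \<epsilon> m" "lc_sums \<epsilon> E" "E < MA - \<sigma>" using eps_seq by blast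
  have ord: "\<forall>m. \<alpha> m \<le> \<beta> m" and covA: "A \<subseteq> (\<Union>m. {\<alpha> m..\<beta> m})" and sm: "lc_sums (\<lambda>m. \<beta> m - \<alpha> m) \<sigma>"
    using g unfolding gcov_def by auto
  define S where "S m = {\<alpha> m..\<beta> m + \<epsilon> m}" for m
  have lt: "\<alpha> m < \<beta> m + \<epsilon> m" for m
  proof -
    have "\<beta> m < \<beta> m + \<epsilon> m" using eps(1) by simp
    thus ?thesis using ord order_le_less_trans by blast
  qed
  have iab: "lc_interval_ab (\<alpha> m) (\<beta> m + \<epsilon> m) (S m)" for m unfolding S_def by (rule closed_int[OF lt])
  have len: "lc_len (S m) = (\<beta> m - \<alpha> m) + \<epsilon> m" for m using len_eq[OF iab] by (simp add: algebra_simps)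
  have sm2: "lc_sums (\<lambda>m. lc_len (S m)) (\<sigma> + E)" unfolding len by (rule sums_add[OF sm eps(2)])
  have "lc_cover A S" unfolding lc_cover_def lc_summable_def
  proof (intro conjI)
    show "\<forall>n. lc_interval (S n)" using iab unfolding lc_interval_def by blast
    show "A \<subseteq> (\<Union>n. S n)"
    proof
      fix x assume "x \<in> A"
      hence "x \<in> (\<Union>m. {\<alpha> m..\<beta> m})" using covA by blast
      then obtain m where "x \<in> {\<alpha> m..\<beta> m}" by blast
      hence xm: "\<alpha> m \<le> x" "x \<le> \<beta> m" by auto
      have "\<beta> m \<le> \<beta> m + \<epsilon> m" using less_imp_le[OF eps(1)[rule_format, of m]] by simp
      hence "x \<le> \<beta> m + \<epsilon> m" using xm(2) by (rule order_trans[rotated])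
      hence "x \<in> S m" unfolding S_def using xm(1) by simp
      thus "x \<in> (\<Union>n. S n)" by blast
    qed
    show "\<exists>s. lc_sums (\<lambda>n. lc_len (S n)) s" using sm2 by blast
  qed
  hence "lc_suminf (\<lambda>n. lc_len (S n)) \<in> lc_cover_sums A" unfolding lc_cover_sums_def by blast
  hence "MA \<le> lc_suminf (\<lambda>n. lc_len (S n))" using inf unfolding lc_is_inf_def by blast
  hence "MA \<le> \<sigma> + E" using suminf_eq[OF sm2] by simp
  moreover have "\<sigma> + E < MA" using eps(3) by (simp add: less_diff_eq add.commute)
  ultimately show False by simp
qed


section \<open>Splitting a cover at an interval\<close>

lemma split_ident: assumes "a \<le> (b::lc)"
  shows "min x a + max a (min x b) + max x b = x + a + b"
proof (cases "x \<le> a")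
  case True
  hence "x \<le> b" using assms by (rule order_trans)
  thus ?thesis using True assms by (simp add: min_def max_def algebra_simps)
next
  case False
  hence xa: "a < x" by (simp add: not_le)
  show ?thesis
  proof (cases "x \<le> b")
    case True
    have "a \<le> x" "\<not> x \<le> a" using xa by (auto simp: not_le less_imp_le)
    thus ?thesis using True by (simp add: min_def max_def algebra_simps)
  next
    case False
    hence bx: "b < x" by (simp add: not_le)
    have "a \<le> x" "\<not> x \<le> a" "b \<le> x" using xa bx by (auto simp: not_le less_imp_le)
    thus ?thesis using False assms by (simp add: min_def max_def algebra_simps)
  qed
qed

lemma split_step:
  assumes g: "gcov X \<alpha> \<beta> \<sigma>" and sub: "Y \<union> {a<..<b} \<subseteq> X" and dis: "Y \<inter> {a<..<b} = {}" and ab: "a < b"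
  shows "\<exists>\<alpha>' \<beta>' \<sigma>'. gcov Y \<alpha>' \<beta>' \<sigma>' \<and> \<sigma>' + (b - a) \<le> \<sigma>"
proof -
  have ord: "\<forall>m. \<alpha> m \<le> \<beta> m" and covX: "X \<subseteq> (\<Union>m. {\<alpha> m..\<beta> m})" and sm: "lc_sums (\<lambda>m. \<beta> m - \<alpha> m) \<sigma>"
    using g unfolding gcov_def by auto
  have ab': "a \<le> b" using ab by simp
  define lo where "lo x = min x a" for x
  define cl where "cl x = max a (min x b)" for x
  define hi where "hi x = max x b" for x
  have mlo: "lo x \<le> lo y" if "x \<le> y" for x y unfolding lo_def using that by (rule min.mono) simp
  have mcl: "cl x \<le> cl y" if "x \<le> y" for x y unfolding cl_def using min.mono[OF that order.refl[of b]] by (rule max.mono[OF order.refl])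
  have mhi: "hi x \<le> hi y" if "x \<le> y" for x y unfolding hi_def using that by (rule max.mono) simp
  define lL where "lL m = lo (\<beta> m) - lo (\<alpha> m)" for m
  define lM where "lM m = cl (\<beta> m) - cl (\<alpha> m)" for m
  define lR where "lR m = hi (\<beta> m) - hi (\<alpha> m)" for m
  have nL: "0 \<le> lL m" for m unfolding lL_def using mlo ord by simp
  have nM: "0 \<le> lM m" for m unfolding lM_def using mcl ord by simp
  have nR: "0 \<le> lR m" for m unfolding lR_def using mhi ord by simp
  have tot: "lL m + lM m + lR m = \<beta> m - \<alpha> m" for m
  proof -
    have "lL m + lM m + lR m = (lo (\<beta> m) + cl (\<beta> m) + hi (\<beta> m)) - (lo (\<alpha> m) + cl (\<alpha> m) + hi (\<alpha> m))"
      unfolding lL_def lM_def lR_def by (simp add: algebra_simps)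
    also have "\<dots> = (\<beta> m + a + b) - (\<alpha> m + a + b)" unfolding lo_def cl_def hi_def split_ident[OF ab'] ..
    finally show ?thesis by simp
  qed
  have leL: "lL m \<le> \<beta> m - \<alpha> m" for m by (rule lin2[OF nM nR]) (simp add: tot[symmetric] algebra_simps)
  have leM: "lM m \<le> \<beta> m - \<alpha> m" for m by (rule lin2[OF nL nR]) (simp add: tot[symmetric] algebra_simps)
  have leR: "lR m \<le> \<beta> m - \<alpha> m" for m by (rule lin2[OF nL nM]) (simp add: tot[symmetric] algebra_simps)
  have nullf: "\<exists>s. lc_sums f s" if "\<And>m. 0 \<le> f m" "\<And>m. f m \<le> \<beta> m - \<alpha> m" for f
  proof (rule summable_null, intro allI)
    fix r
    obtain N where N: "\<forall>m\<ge>N. vb r (\<beta> m - \<alpha> m)" using sums_null[OF sm] by blast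
    show "\<exists>N. \<forall>n\<ge>N. vb r (f n)" using N vb_le[OF that(1) that(2)] by blast
  qed
  obtain sL where sL: "lc_sums lL sL" using nullf[of lL] nL leL by blast
  obtain sM where sM: "lc_sums lM sM" using nullf[of lM] nM leM by blast
  obtain sR where sR: "lc_sums lR sR" using nullf[of lR] nR leR by blast
  have "lc_sums (\<lambda>m. lL m + lM m + lR m) (sL + sM + sR)" by (rule sums_add[OF sums_add[OF sL sM] sR])
  hence "lc_sums (\<lambda>m. \<beta> m - \<alpha> m) (sL + sM + sR)" unfolding tot .
  hence sig: "\<sigma> = sL + sM + sR" using sm sums_unique by blast
  have covM: "\<forall>x. a < x \<and> x < b \<longrightarrow> (\<exists>m. cl (\<alpha> m) \<le> x \<and> x \<le> cl (\<beta> m))"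
  proof (intro allI impI)
    fix x assume x: "a < x \<and> x < b"
    hence "x \<in> X" using sub by auto
    hence "x \<in> (\<Union>m. {\<alpha> m..\<beta> m})" using covX by blast
    then obtain m where "x \<in> {\<alpha> m..\<beta> m}" by blast
    hence m: "\<alpha> m \<le> x" "x \<le> \<beta> m" by auto
    have "x \<le> b" "a \<le> x" using x by (auto simp: less_imp_le)
    hence clx: "cl x = x" unfolding cl_def by (simp add: min_absorb1 max_absorb2)
    show "\<exists>m. cl (\<alpha> m) \<le> x \<and> x \<le> cl (\<beta> m)" using mcl[OF m(1)] mcl[OF m(2)] clx by metis
  qed
  have HBM: "b - a \<le> sM" using HB[OF ab _ _ covM] sM mcl ord unfolding lM_def by blast
  define \<alpha>' where "\<alpha>' n = (if even n then lo (\<alpha> (n div 2)) else hi (\<alpha> (n div 2)))" for n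
  define \<beta>' where "\<beta>' n = (if even n then lo (\<beta> (n div 2)) else hi (\<beta> (n div 2)))" for n
  have lens: "(\<lambda>n. \<beta>' n - \<alpha>' n) = (\<lambda>n. if even n then lL (n div 2) else lR (n div 2))"
    unfolding \<alpha>'_def \<beta>'_def lL_def lR_def by auto
  have sm': "lc_sums (\<lambda>n. \<beta>' n - \<alpha>' n) (sL + sR)" unfolding lens by (rule sums_interleave[OF sL sR])
  have ord': "\<forall>n. \<alpha>' n \<le> \<beta>' n" unfolding \<alpha>'_def \<beta>'_def using mlo mhi ord by simp
  have covY: "Y \<subseteq> (\<Union>n. {\<alpha>' n..\<beta>' n})"
  proof
    fix y assume y: "y \<in> Y"
    hence "y \<in> X" using sub by auto
    hence "y \<in> (\<Union>m. {\<alpha> m..\<beta> m})" using covX by blast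
    then obtain m where "y \<in> {\<alpha> m..\<beta> m}" by blast
    hence m: "\<alpha> m \<le> y" "y \<le> \<beta> m" by auto
    have "y \<notin> {a<..<b}" using y dis by blast
    hence "y \<le> a \<or> b \<le> y" by (auto simp: not_less)
    thus "y \<in> (\<Union>n. {\<alpha>' n..\<beta>' n})"
    proof
      assume ya: "y \<le> a"
      have "lo y = y" unfolding lo_def using ya by simp
      hence "\<alpha>' (2*m) \<le> y" "y \<le> \<beta>' (2*m)" unfolding \<alpha>'_def \<beta>'_def using mlo[OF m(1)] mlo[OF m(2)] by auto
      thus ?thesis by auto
    next
      assume yb: "b \<le> y"
      have "hi y = y" unfolding hi_def using yb by simp
      hence "\<alpha>' (2*m+1) \<le> y" "y \<le> \<beta>' (2*m+1)" unfolding \<alpha>'_def \<beta>'_def using mhi[OF m(1)] mhi[OF m(2)] by auto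
      thus ?thesis by auto
    qed
  qed
  have "gcov Y \<alpha>' \<beta>' (sL + sR)" unfolding gcov_def using ord' covY sm' by blast
  moreover have "sL + sR + (b - a) \<le> \<sigma>" unfolding sig by (rule lin1[OF HBM]) (simp add: algebra_simps)
  ultimately show ?thesis by blast
qed

lemma peel:
  assumes ab: "\<forall>n. a n < b n" and dA: "\<forall>n. A \<inter> {a n<..<b n} = {}"
    and dI: "\<forall>n k. n \<noteq> k \<longrightarrow> {a n<..<b n} \<inter> {a k<..<b k} = {}"
  shows "gcov (A \<union> (\<Union>n\<in>{..<N}. {a n<..<b n})) \<alpha> \<beta> \<sigma> \<Longrightarrow>
     \<exists>\<alpha>' \<beta>' \<sigma>'. gcov A \<alpha>' \<beta>' \<sigma>' \<and> \<sigma>' + lc_psum (\<lambda>n. b n - a n) N \<le> \<sigma>"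
proof (induction N arbitrary: \<alpha> \<beta> \<sigma>)
  case 0 thus ?case by auto
next
  case (Suc N)
  define Y where "Y = A \<union> (\<Union>n\<in>{..<N}. {a n<..<b n})"
  have XY: "A \<union> (\<Union>n\<in>{..<Suc N}. {a n<..<b n}) = Y \<union> {a N<..<b N}"
    unfolding Y_def lessThan_Suc by auto
  have dis: "Y \<inter> {a N<..<b N} = {}"
  proof -
    have "{a n<..<b n} \<inter> {a N<..<b N} = {}" if "n < N" for n
      using dI that by (metis less_irrefl)
    thus ?thesis unfolding Y_def using dA by blast
  qed
  obtain \<alpha>1 \<beta>1 \<sigma>1 where s1: "gcov Y \<alpha>1 \<beta>1 \<sigma>1" "\<sigma>1 + (b N - a N) \<le> \<sigma>"
    using split_step[OF Suc.prems _ dis] ab XY by auto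
  obtain \<alpha>' \<beta>' \<sigma>' where s2: "gcov A \<alpha>' \<beta>' \<sigma>'" "\<sigma>' + lc_psum (\<lambda>n. b n - a n) N \<le> \<sigma>1"
    using Suc.IH[of \<alpha>1 \<beta>1 \<sigma>1] s1(1) unfolding Y_def by blast
  have "\<sigma>' + lc_psum (\<lambda>n. b n - a n) (Suc N) \<le> \<sigma>"
    by (rule lin2[OF s2(2) s1(2)]) (simp add: algebra_simps)
  thus ?case using s2(1) by blast
qed


lemma inf_unique: "lc_is_inf m X \<Longrightarrow> lc_is_inf m' X \<Longrightarrow> m = m'"
  unfolding lc_is_inf_def by (meson order.antisym)

lemma Mu_eq: "lc_is_inf m (lc_cover_sums A) \<Longrightarrow> lc_Mu A = m"
  unfolding lc_Mu_def by (rule the_equality) (auto intro: inf_unique)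

theorem mainTheorem7:
  fixes A :: "lc set" and I :: "nat \<Rightarrow> lc set"
  assumes "lc_outer_measurable A"
    and "\<And>n. lc_interval (I n)"
    and "\<And>m n. m \<noteq> n \<Longrightarrow> I m \<inter> I n = {}"
    and "\<And>n. A \<inter> I n = {}"
    and "lc_tendsto (\<lambda>n. lc_len (I n)) 0"
  shows "lc_summable (\<lambda>n. lc_len (I n))
    \<and> lc_outer_measurable (A \<union> (\<Union>n. I n))
    \<and> lc_Mu (A \<union> (\<Union>n. I n)) = lc_Mu A + lc_suminf (\<lambda>n. lc_len (I n))"
proof -
  have "\<forall>n. \<exists>a b. lc_interval_ab a b (I n)" using assms(2) unfolding lc_interval_def by blast
  then obtain a b where ab: "\<forall>n. lc_interval_ab (a n) (b n) (I n)" by metis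
  define L where "L n = lc_len (I n)" for n
  have Leq: "L = (\<lambda>n. b n - a n)" unfolding L_def using len_eq ab by blast
  have altb: "\<forall>n. a n < b n" using int_lt ab by blast
  have Isup: "{a n<..<b n} \<subseteq> I n" for n using int_sup ab by blast
  have "\<forall>r. \<exists>N. \<forall>n\<ge>N. vb r (L n)" using assms(5) unfolding tendsto_vb L_def by simp
  then obtain SI where SI: "lc_sums L SI" using summable_null by blast
  have summ: "lc_summable (\<lambda>n. lc_len (I n))" using SI unfolding lc_summable_def L_def by blast
  have SIeq: "lc_suminf (\<lambda>n. lc_len (I n)) = SI" using suminf_eq SI unfolding L_def by blast
  obtain MA where MA: "lc_is_inf MA (lc_cover_sums A)" using assms(1) unfolding lc_outer_measurable_def by blast
  have MAeq: "lc_Mu A = MA" using Mu_eq[OF MA] .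
  define U where "U = A \<union> (\<Union>n. I n)"
  have dA: "\<forall>n. A \<inter> {a n<..<b n} = {}" using assms(4) Isup by blast
  have dI: "\<forall>n k. n \<noteq> k \<longrightarrow> {a n<..<b n} \<inter> {a k<..<b k} = {}" using assms(3) Isup by blast
  have lower: "\<forall>x\<in>lc_cover_sums U. MA + SI \<le> x"
  proof
    fix x assume "x \<in> lc_cover_sums U"
    then obtain S where S: "x = lc_suminf (\<lambda>n. lc_len (S n))" "lc_cover U S" unfolding lc_cover_sums_def by blast
    obtain \<alpha> \<beta> where g: "gcov U \<alpha> \<beta> x" using cover_gcov[OF S(2)] S(1) by blast
    have "lc_psum L N \<le> x - MA" for N
    proof -
      have "A \<union> (\<Union>n\<in>{..<N}. {a n<..<b n}) \<subseteq> U" unfolding U_def using Isup by blast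
      hence "gcov (A \<union> (\<Union>n\<in>{..<N}. {a n<..<b n})) \<alpha> \<beta> x" using g gcov_mono by blast
      then obtain \<alpha>' \<beta>' \<sigma>' where p: "gcov A \<alpha>' \<beta>' \<sigma>'" "\<sigma>' + lc_psum (\<lambda>n. b n - a n) N \<le> x"
        using peel[OF altb dA dI] by blast
      have "MA \<le> \<sigma>'" using gcov_lower[OF MA p(1)] .
      have p2: "\<sigma>' + lc_psum L N \<le> x" using p(2) unfolding Leq .
      show ?thesis by (rule lin2[OF \<open>MA \<le> \<sigma>'\<close> p2]) (simp add: algebra_simps)
    qed
    hence "SI \<le> x - MA" using tendsto_le[of "lc_psum L" SI 0 "x - MA"] SI unfolding lc_sums_def by blast
    thus "MA + SI \<le> x" by (simp add: le_diff_eq add.commute)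
  qed
  have greatest: "\<forall>m'. (\<forall>x\<in>lc_cover_sums U. m' \<le> x) \<longrightarrow> m' \<le> MA + SI"
  proof (intro allI impI)
    fix m' assume H: "\<forall>x\<in>lc_cover_sums U. m' \<le> x"
    have "\<forall>y\<in>lc_cover_sums A. m' - SI \<le> y"
    proof
      fix y assume "y \<in> lc_cover_sums A"
      then obtain S where S: "y = lc_suminf (\<lambda>n. lc_len (S n))" "lc_cover A S" unfolding lc_cover_sums_def by blast
      define T where "T n = (if even n then S (n div 2) else I (n div 2))" for n
      have Sy: "lc_sums (\<lambda>n. lc_len (S n)) y" using S unfolding lc_cover_def by (simp add: summable_sums)
      have lenT: "(\<lambda>n. lc_len (T n)) = (\<lambda>n. if even n then lc_len (S (n div 2)) else L (n div 2))"
        unfolding T_def L_def by auto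
      have Ts: "lc_sums (\<lambda>n. lc_len (T n)) (y + SI)" unfolding lenT by (rule sums_interleave[OF Sy SI])
      have "lc_cover U T" unfolding lc_cover_def lc_summable_def
      proof (intro conjI)
        show "\<forall>n. lc_interval (T n)" using S(2) assms(2) unfolding T_def lc_cover_def by auto
        show "U \<subseteq> (\<Union>n. T n)"
        proof
          fix x assume "x \<in> U"
          hence "x \<in> A \<or> (\<exists>n. x \<in> I n)" unfolding U_def by blast
          thus "x \<in> (\<Union>n. T n)"
          proof
            assume "x \<in> A"
            then obtain m where "x \<in> S m" using S(2) unfolding lc_cover_def by blast
            hence "x \<in> T (2*m)" unfolding T_def by simp
            thus ?thesis by blast
          next
            assume "\<exists>n. x \<in> I n"
            then obtain m where "x \<in> I m" by blast
            hence "x \<in> T (2*m+1)" unfolding T_def by simp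
            thus ?thesis by blast
          qed
        qed
        show "\<exists>s. lc_sums (\<lambda>n. lc_len (T n)) s" using Ts by blast
      qed
      hence "lc_suminf (\<lambda>n. lc_len (T n)) \<in> lc_cover_sums U" unfolding lc_cover_sums_def by blast
      hence "m' \<le> y + SI" using H suminf_eq[OF Ts] by simp
      thus "m' - SI \<le> y" by (simp add: diff_le_eq)
    qed
    hence "m' - SI \<le> MA" using MA unfolding lc_is_inf_def by blast
    thus "m' \<le> MA + SI" by (simp add: diff_le_eq)
  qed
  have inf: "lc_is_inf (MA + SI) (lc_cover_sums U)" unfolding lc_is_inf_def using lower greatest by blast
  have "lc_outer_measurable U" unfolding lc_outer_measurable_def using inf by blast
  moreover have "lc_Mu U = lc_Mu A + lc_suminf (\<lambda>n. lc_len (I n))" using Mu_eq[OF inf] MAeq SIeq by simp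
  ultimately show ?thesis using summ unfolding U_def by blast
qed

end
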